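(* Let $M,S,a$ be integers with $M+S\ge0$. Then the sum on the left below has only finitely many nonzero terms, and $$\sum_{k\in\mathbb{Z}}q^{k^2+ak}\left[{M\atop a+k}\right]_q^+\left[{S\atop k}\right]_q^+=\left[{M+S\atop S+a}\right]_q .$$
   Context: Let $(q)_n=\prod_{i=1}^n(1-q^i)$. Define $\left[{n\atop m}\right]_q=\frac{(q)_n}{(q)_{n-m}(q)_m}$ if $n\ge m\ge0$ and $0$ otherwise. For all integers $n,m$ set $\left[{n\atop m}\right]_q^+=\left[{n\atop m}\right]_q$ if $n\ge0$, and $\left[{n\atop m}\right]_q^+=(-1)^{n-m}q^{-((n-m)^2+(n-m))/2}\left[{-m-1\atop -n-1}\right]_{q^{-1}}$ if $n<0$. *)

theory Defs
  imports Complex_Main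
begin

definition qpoch :: "'a::field \<Rightarrow> nat \<Rightarrow> 'a" where
  "qpoch q n = (\<Prod>i=1..n. 1 - q ^ i)"

definition qbinom :: "'a::field \<Rightarrow> int \<Rightarrow> int \<Rightarrow> 'a" where
  "qbinom q n m = (if 0 \<le> m \<and> m \<le> n
     then qpoch q (nat n) / (qpoch q (nat (n - m)) * qpoch q (nat m)) else 0)"

definition qbinom_plus :: "'a::field \<Rightarrow> int \<Rightarrow> int \<Rightarrow> 'a" where
  "qbinom_plus q n m = (if 0 \<le> n then qbinom q n m
     else (-1) powi (n - m) * q powi (- (((n - m)^2 + (n - m)) div 2))
          * qbinom (inverse q) (- m - 1) (- n - 1))"

end

theory Submission
  imports Defs
begin

lemma qpoch_Suc: "qpoch q (Suc n) = qpoch q n * (1 - q ^ Suc n)"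
  unfolding qpoch_def by (simp add: atLeastAtMostSuc_conv mult.commute)

lemma qpoch_0[simp]: "qpoch q 0 = 1"
  unfolding qpoch_def by simp

lemma qpoch_nz: assumes "\<forall>n::nat. n \<ge> 1 \<longrightarrow> q ^ n \<noteq> 1" shows "qpoch q n \<noteq> 0"
  unfolding qpoch_def using assms by (auto simp: prod_zero_iff)

lemma frac_aux1:
  fixes A R K x y z c :: "'a::field"
  assumes "R \<noteq> 0" "K \<noteq> 0" "x \<noteq> 0" "y \<noteq> 0" "z = x + c * y"
  shows "A * z / (R * x * (K * y)) = A / (R * (K * y)) + c * (A / (R * x * K))"
  using assms by (simp add: field_simps)

definition Cn :: "'a::field \<Rightarrow> nat \<Rightarrow> nat \<Rightarrow> 'a" where
  "Cn q n k = (if k \<le> n then qpoch q n / (qpoch q (n-k) * qpoch q k) else 0)"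

lemma qbinom_nat: "qbinom q (int n) (int k) = Cn q n k"
  unfolding qbinom_def Cn_def by (simp add: nat_diff_distrib)

lemma Cn_pascal1:
  assumes nz: "\<forall>n::nat. n \<ge> 1 \<longrightarrow> q ^ n \<noteq> 1"
  shows "Cn q (Suc n) (Suc k) = Cn q n (Suc k) + q ^ (n - k) * Cn q n k"
proof (cases "k \<le> n")
  case False then show ?thesis by (simp add: Cn_def)
next
  case True
  note N = qpoch_nz[OF nz]
  show ?thesis
  proof (cases "k = n")
    case True then show ?thesis using N by (simp add: Cn_def)
  next
    case False
    then obtain r where n: "n = k + r + 1" using \<open>k \<le> n\<close> by (metis add.commute add_Suc le_neq_implies_less less_iff_Suc_add Suc_eq_plus1)
    have e1: "Suc n - Suc k = Suc r" "n - Suc k = r" "n - k = Suc r" using n by auto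
    have "Cn q (Suc n) (Suc k) = qpoch q (Suc n) / (qpoch q (Suc r) * qpoch q (Suc k))"
      using n by (simp add: Cn_def e1)
    moreover have "Cn q n (Suc k) = qpoch q n / (qpoch q r * qpoch q (Suc k))"
      using n by (simp add: Cn_def e1)
    moreover have "Cn q n k = qpoch q n / (qpoch q (Suc r) * qpoch q k)"
      using n by (simp add: Cn_def e1)
    moreover have "1 - q ^ Suc n = (1 - q ^ Suc r) + q ^ Suc r * (1 - q ^ Suc k)"
      using n by (simp add: algebra_simps flip: power_add)
    moreover have "1 - q ^ Suc r \<noteq> 0" "1 - q ^ Suc k \<noteq> 0" using nz by auto
    ultimately show ?thesis using N[of r] N[of k] unfolding e1 qpoch_Suc[of q n] qpoch_Suc[of q r] qpoch_Suc[of q k]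
      using frac_aux1 by metis
  qed
qed

lemma frac_aux2:
  fixes A R K x y z c :: "'a::field"
  assumes "R \<noteq> 0" "K \<noteq> 0" "x \<noteq> 0" "y \<noteq> 0" "z = y + c * x"
  shows "A * z / (R * x * (K * y)) = A / (R * x * K) + c * (A / (R * (K * y)))"
  using assms by (simp add: field_simps)

lemma Cn_pascal2:
  assumes nz: "\<forall>n::nat. n \<ge> 1 \<longrightarrow> q ^ n \<noteq> 1"
  shows "Cn q (Suc n) (Suc k) = Cn q n k + q ^ (Suc k) * Cn q n (Suc k)"
proof (cases "k \<le> n")
  case False then show ?thesis by (simp add: Cn_def)
next
  case True
  note N = qpoch_nz[OF nz]
  show ?thesis
  proof (cases "k = n")
    case True then show ?thesis using N by (simp add: Cn_def)
  next
    case False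
    then obtain r where n: "n = k + r + 1" using \<open>k \<le> n\<close> by (metis add.commute add_Suc le_neq_implies_less less_iff_Suc_add Suc_eq_plus1)
    have e1: "Suc n - Suc k = Suc r" "n - Suc k = r" "n - k = Suc r" using n by auto
    have "Cn q (Suc n) (Suc k) = qpoch q (Suc n) / (qpoch q (Suc r) * qpoch q (Suc k))"
      using n by (simp add: Cn_def e1)
    moreover have "Cn q n (Suc k) = qpoch q n / (qpoch q r * qpoch q (Suc k))"
      using n by (simp add: Cn_def e1)
    moreover have "Cn q n k = qpoch q n / (qpoch q (Suc r) * qpoch q k)"
      using n by (simp add: Cn_def e1)
    moreover have "1 - q ^ Suc n = (1 - q ^ Suc k) + q ^ Suc k * (1 - q ^ Suc r)"
      using n by (simp add: algebra_simps flip: power_add)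
    moreover have "1 - q ^ Suc r \<noteq> 0" "1 - q ^ Suc k \<noteq> 0" using nz by auto
    ultimately show ?thesis using N[of r] N[of k] unfolding e1 qpoch_Suc[of q n] qpoch_Suc[of q r] qpoch_Suc[of q k]
      using frac_aux2 by metis
  qed
qed

lemma qbinom_neg2: "m < 0 \<Longrightarrow> qbinom q n m = 0"
  by (simp add: qbinom_def)

lemma qbinom_gt: "n < m \<Longrightarrow> qbinom q n m = 0"
  by (simp add: qbinom_def)

lemma qbinom_0: assumes nz: "\<forall>n::nat. n \<ge> 1 \<longrightarrow> q ^ n \<noteq> 1" and "0 \<le> n"
  shows "qbinom q n 0 = 1"
  using assms qpoch_nz[OF nz] by (simp add: qbinom_def)

lemma qbinom_pascal1:
  assumes nz: "\<forall>n::nat. n \<ge> 1 \<longrightarrow> q ^ n \<noteq> 1" and h: "1 \<le> k \<or> 1 \<le> n"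
  shows "qbinom q n k = qbinom q (n-1) k + q powi (n-k) * qbinom q (n-1) (k-1)"
proof -
  consider "k < 0" | "k = 0" | "k \<ge> 1 \<and> n < k" | "k \<ge> 1 \<and> n \<ge> k" by linarith
  then show ?thesis
  proof cases
    case 1 then show ?thesis by (simp add: qbinom_neg2)
  next
    case 2 then show ?thesis using h qbinom_0[OF nz] by (simp add: qbinom_neg2)
  next
    case 3 then show ?thesis by (simp add: qbinom_gt)
  next
    case 4
    define n' where "n' = nat (n-1)"
    define k' where "k' = nat (k-1)"
    have e: "n = int (Suc n')" "k = int (Suc k')" "k' \<le> n'" "n - 1 = int n'" "k - 1 = int k'"
      "n - k = int (n' - k')" using 4 unfolding n'_def k'_def by auto
    have a1: "qbinom q n k = Cn q (Suc n') (Suc k')" using qbinom_nat e(1,2) by metis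
    have a2: "qbinom q (n-1) k = Cn q n' (Suc k')" using qbinom_nat e(2,4) by metis
    have a3: "qbinom q (n-1) (k-1) = Cn q n' k'" using qbinom_nat e(4,5) by metis
    have a4: "q powi (n-k) = q ^ (n' - k')" using e(6) by simp
    show ?thesis unfolding a1 a2 a3 a4 using Cn_pascal1[OF nz] by simp
  qed
qed

lemma qbinom_pascal2:
  assumes nz: "\<forall>n::nat. n \<ge> 1 \<longrightarrow> q ^ n \<noteq> 1" and h: "1 \<le> k \<or> 1 \<le> n"
  shows "qbinom q n k = qbinom q (n-1) (k-1) + q powi k * qbinom q (n-1) k"
proof -
  consider "k < 0" | "k = 0" | "k \<ge> 1 \<and> n < k" | "k \<ge> 1 \<and> n \<ge> k" by linarith
  then show ?thesis
  proof cases
    case 1 then show ?thesis by (simp add: qbinom_neg2)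
  next
    case 2 then show ?thesis using h qbinom_0[OF nz] by (simp add: qbinom_neg2)
  next
    case 3 then show ?thesis by (simp add: qbinom_gt)
  next
    case 4
    define n' where "n' = nat (n-1)"
    define k' where "k' = nat (k-1)"
    have e: "n = int (Suc n')" "k = int (Suc k')" "k' \<le> n'" "n - 1 = int n'" "k - 1 = int k'"
      using 4 unfolding n'_def k'_def by auto
    have a1: "qbinom q n k = Cn q (Suc n') (Suc k')" using qbinom_nat e(1,2) by metis
    have a2: "qbinom q (n-1) k = Cn q n' (Suc k')" using qbinom_nat e(2,4) by metis
    have a3: "qbinom q (n-1) (k-1) = Cn q n' k'" using qbinom_nat e(4,5) by metis
    have a4: "q powi k = q ^ (Suc k')" by (simp only: e(2) power_int_of_nat)
    show ?thesis unfolding a1 a2 a3 a4 using Cn_pascal2[OF nz] by simp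
  qed
qed

definition T :: "int \<Rightarrow> int" where "T x = (x^2 + x) div 2"

lemma T_diff: "T (x - 1) = T x - x"
proof -
  have "x^2 + x = ((x-1)^2 + (x-1)) + 2*x" by (simp add: power2_eq_square algebra_simps)
  then show ?thesis unfolding T_def by simp
qed

lemma nz_inv: fixes q :: "'a::field" assumes "\<forall>n::nat. n \<ge> 1 \<longrightarrow> q ^ n \<noteq> 1" shows "\<forall>n::nat. n \<ge> 1 \<longrightarrow> (inverse q) ^ n \<noteq> 1"
proof (intro allI impI)
  fix n :: nat assume "n \<ge> 1"
  with assms have "q ^ n \<noteq> 1" by auto
  then have "inverse (q ^ n) \<noteq> 1" by simp
  then show "inverse q ^ n \<noteq> 1" by (simp add: power_inverse)
qed

lemma qplus_neg: assumes "n < 0" shows "qbinom_plus q n m =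
   (-1) powi (n - m) * q powi (- T (n - m)) * qbinom (inverse q) (- m - 1) (- n - 1)"
proof -
  have h: "\<not> 0 \<le> n" using assms by simp
  show ?thesis unfolding qbinom_plus_def T_def if_not_P[OF h] by (rule refl)
qed

lemma alg_aux:
  fixes c e w B1 B2 B3 :: "'a::field"
  assumes "w \<noteq> 0" "B2 = B3 + inverse w * B1"
  shows "c * e * B1 = w * (c * e * B2) + (- c) * (e * w) * B3"
proof -
  have h: "w * B2 = w * B3 + B1" using assms by (simp add: field_simps)
  have "w * (c * e * B2) + (- c) * (e * w) * B3 = c * e * (w * B2 - w * B3)" by (simp add: algebra_simps)
  also have "\<dots> = c * e * B1" using h by simp
  finally show ?thesis by simp
qed

lemma qplus_pascalA:
  assumes q0: "q \<noteq> 0" and nz: "\<forall>n::nat. n \<ge> 1 \<longrightarrow> q ^ n \<noteq> 1"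
  shows "qbinom_plus q n m = q powi (n - m) * qbinom_plus q (n-1) (m-1) + qbinom_plus q (n-1) m"
proof -
  consider "n \<ge> 1" | "n = 0" | "n \<le> -1" by linarith
  then show ?thesis
  proof cases
    case 1
    then show ?thesis unfolding qbinom_plus_def using qbinom_pascal1[OF nz, of m n] by (simp add: algebra_simps)
  next
    case 2
    have m1: "(-1::'a) powi (- m - 1) = - ((-1) powi (- m))"
    proof -
      have "(-1::'a) powi (-m + (-1)) = (-1) powi (-m) * (-1) powi (-1)" by (rule power_int_add) simp
      then show ?thesis by (simp add: power_int_minus)
    qed
    have t: "- T (-m-1) = - T (- m) + (- m)" using T_diff[of "-m"] by simp
    have m2: "q powi (- T (- m - 1)) = q powi (- T (- m)) * q powi (- m)"
      unfolding t using power_int_add[of q "- T (- m)" "-m"] q0 by simp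
    have Q0: "qbinom (inverse q) x 0 = (if x \<ge> 0 then 1 else 0)" for x
      using qbinom_0[OF nz_inv[OF nz]] by (simp add: qbinom_def)
    define E where "E = (-1::'a) powi (-m) * q powi (- T (-m))"
    have A0: "qbinom_plus q 0 m = (if m = 0 then 1 else 0)"
      using qbinom_0[OF nz, of 0] by (simp add: qbinom_def qbinom_plus_def)
    have A1: "qbinom_plus q (-1) (m-1) = (if m \<le> 0 then E else 0)"
      using qplus_neg[of "-1" q "m-1"] Q0[of "-m"] unfolding E_def by simp
    have A2: "qbinom_plus q (-1) m = (if m \<le> -1 then - (E * q powi (-m)) else 0)"
    proof -
      have e: "(-1::int) - m = -m - 1" by simp
      show ?thesis using qplus_neg[of "-1" q m] Q0[of "-m-1"] unfolding e m1 m2 E_def by simp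
    qed
    have T0: "T 0 = 0" by (simp add: T_def)
    have "qbinom_plus q 0 m = q powi (0 - m) * qbinom_plus q (-1) (m-1) + qbinom_plus q (-1) m"
      unfolding A0 A1 A2 using q0
      by (cases "m = 0") (auto simp: E_def T0 power_int_minus field_simps)
    then show ?thesis using 2 by simp
  next
    case 3
    define x where "x = n - m"
    define u where "u = - m - 1"
    define N where "N = - n - 1"
    have P1: "qbinom_plus q n m = (-1) powi x * q powi (- T x) * qbinom (inverse q) u N"
      using 3 qplus_neg[of n q m] x_def u_def N_def by simp
    have P2: "qbinom_plus q (n-1) (m-1) = (-1) powi x * q powi (- T x) * qbinom (inverse q) (u+1) (N+1)"
      unfolding x_def u_def N_def using 3 qplus_neg[of "n-1" q "m-1"] by (simp add: algebra_simps)
    have P3: "qbinom_plus q (n-1) m = (- ((-1) powi x)) * (q powi (- T x) * q powi x) * qbinom (inverse q) u (N+1)"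
    proof -
      have m1: "(-1::'a) powi (x - 1) = - ((-1) powi x)"
      proof -
        have "(-1::'a) powi (x + (-1)) = (-1) powi x * (-1) powi (-1)" by (rule power_int_add) simp
        then show ?thesis by (simp add: power_int_minus)
      qed
      have t: "- T (x - 1) = - T x + x" using T_diff[of x] by simp
      have m2: "q powi (- T (x - 1)) = q powi (- T x) * q powi x"
        unfolding t using power_int_add[of q "- T x" x] q0 by simp
      show ?thesis using 3 qplus_neg[of "n-1" q m] m1 m2 unfolding x_def u_def N_def by (simp add: algebra_simps)
    qed
    have PB: "qbinom (inverse q) (u+1) (N+1) = qbinom (inverse q) u (N+1) + inverse (q powi x) * qbinom (inverse q) u N"
      using qbinom_pascal1[OF nz_inv[OF nz], of "N+1" "u+1"] 3 unfolding x_def u_def N_def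
      by (simp add: power_int_inverse algebra_simps)
    have nm: "n - m = x" using x_def by simp
    have w0: "q powi x \<noteq> 0" using q0 by simp
    show ?thesis unfolding P1 P2 P3 nm
      using alg_aux[where c="(-1) powi x" and e="q powi (- T x)", OF w0 PB] .
  qed
qed


definition tt :: "'a::field \<Rightarrow> int \<Rightarrow> int \<Rightarrow> int \<Rightarrow> int \<Rightarrow> 'a" where
  "tt q M S a k = q powi (k^2 + a*k) * qbinom_plus q M (a + k) * qbinom_plus q S k"

definition ff :: "'a::field \<Rightarrow> int \<Rightarrow> int \<Rightarrow> int \<Rightarrow> 'a" where
  "ff q M S a = (\<Sum>k\<in>{-a..M-a}. tt q M S a k)"

lemma sum_shift1: "(\<Sum>k\<in>{lo..hi::int}. g k) = (\<Sum>j\<in>{lo-1..hi-1}. g (j+1))"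
  by (rule sum.reindex_bij_witness[of _ "\<lambda>j. j + 1" "\<lambda>k. k - 1"]) auto

lemma exp_aux:
  fixes q :: "'a::field" assumes q0: "q \<noteq> 0"
  shows "q powi ((j+1)^2 + a*(j+1)) * q powi (S - (j+1)) = q powi (S+a) * q powi (j^2 + (a+1)*j)"
proof -
  have "q powi ((j+1)^2 + a*(j+1)) * q powi (S - (j+1)) = q powi (((j+1)^2 + a*(j+1)) + (S - (j+1)))"
    using q0 by (simp add: power_int_add)
  also have "((j+1)^2 + a*(j+1)) + (S - (j+1)) = (S+a) + (j^2 + (a+1)*j)"
    by (simp add: power2_eq_square algebra_simps)
  also have "q powi ((S+a) + (j^2 + (a+1)*j)) = q powi (S+a) * q powi (j^2 + (a+1)*j)"
    using q0 by (simp add: power_int_add)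
  finally show ?thesis .
qed

lemma RS:
  fixes q :: "'a::field"
  assumes q0: "q \<noteq> 0" and nz: "\<forall>n::nat. n \<ge> 1 \<longrightarrow> q ^ n \<noteq> 1"
  shows "ff q M S a = q powi (S+a) * ff q M (S-1) (a+1) + ff q M (S-1) a"
proof -
  have "ff q M S a = (\<Sum>k\<in>{-a..M-a}. q powi (k^2 + a*k) * qbinom_plus q M (a + k) * (q powi (S - k) * qbinom_plus q (S-1) (k-1)))
     + (\<Sum>k\<in>{-a..M-a}. tt q M (S-1) a k)"
    unfolding ff_def tt_def qplus_pascalA[OF q0 nz, of S] by (simp add: sum.distrib algebra_simps)
  also have "(\<Sum>k\<in>{-a..M-a}. q powi (k^2 + a*k) * qbinom_plus q M (a + k) * (q powi (S - k) * qbinom_plus q (S-1) (k-1)))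
     = (\<Sum>j\<in>{-a-1..M-a-1}. q powi ((j+1)^2 + a*(j+1)) * qbinom_plus q M (a + (j+1)) * (q powi (S - (j+1)) * qbinom_plus q (S-1) ((j+1)-1)))"
    by (rule sum_shift1)
  also have "\<dots> = (\<Sum>j\<in>{-(a+1)..M-(a+1)}. q powi (S+a) * tt q M (S-1) (a+1) j)"
  proof (rule sum.cong)
    show "{-a-1..M-a-1} = {-(a+1)..M-(a+1)}" by (simp add: algebra_simps)
  next
    fix j
    show "q powi ((j+1)^2 + a*(j+1)) * qbinom_plus q M (a + (j+1)) * (q powi (S - (j+1)) * qbinom_plus q (S-1) ((j+1)-1))
      = q powi (S+a) * tt q M (S-1) (a+1) j"
      unfolding tt_def using exp_aux[OF q0, of j a S]
      by (simp add: algebra_simps)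
  qed
  also have "\<dots> = q powi (S+a) * ff q M (S-1) (a+1)"
    unfolding ff_def by (simp add: sum_distrib_left)
  finally show ?thesis unfolding ff_def by simp
qed


lemma qplus_nonneg: "0 \<le> n \<Longrightarrow> qbinom_plus q n m = qbinom q n m"
  by (simp add: qbinom_plus_def)

lemma Up:
  fixes q :: "'a::field"
  assumes q0: "q \<noteq> 0" and nz: "\<forall>n::nat. n \<ge> 1 \<longrightarrow> q ^ n \<noteq> 1"
  shows "\<forall>M \<ge> 0. \<forall>a. ff q M (int s) a = qbinom_plus q (M + int s) (int s + a)"
proof (induction s)
  case 0
  show ?case
  proof (intro allI impI)
    fix M a :: int assume M: "0 \<le> M"
    have P0: "qbinom_plus q 0 k = (if k = 0 then 1 else 0)" for k
      using qbinom_0[OF nz, of 0] by (simp add: qbinom_def qbinom_plus_def)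
    have "ff q M 0 a = (\<Sum>k\<in>{-a..M-a}. if k = 0 then qbinom_plus q M a else 0)"
      unfolding ff_def tt_def P0 by (rule sum.cong) auto
    also have "\<dots> = (if 0 \<in> {-a..M-a} then qbinom_plus q M a else 0)"
      by (rule sum.delta) simp
    also have "\<dots> = qbinom_plus q M a"
      using M by (auto simp: qbinom_plus_def qbinom_def)
    finally show "ff q M (int 0) a = qbinom_plus q (M + int 0) (int 0 + a)" by simp
  qed
next
  case (Suc s)
  show ?case
  proof (intro allI impI)
    fix M a :: int assume M: "0 \<le> M"
    have "ff q M (int (Suc s)) a = q powi (int (Suc s) + a) * ff q M (int s) (a+1) + ff q M (int s) a"
      using RS[OF q0 nz, of M "int (Suc s)" a] by simp
    also have "\<dots> = q powi (int (Suc s) + a) * qbinom q (M + int s) (int s + (a+1)) + qbinom q (M + int s) (int s + a)"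
      using Suc.IH M by (simp add: qplus_nonneg)
    also have "\<dots> = qbinom q (M + int (Suc s)) (int (Suc s) + a)"
      using qbinom_pascal2[OF nz, of "int (Suc s) + a" "M + int (Suc s)"] M by (simp add: algebra_simps)
    finally show "ff q M (int (Suc s)) a = qbinom_plus q (M + int (Suc s)) (int (Suc s) + a)"
      using M by (simp add: qplus_nonneg)
  qed
qed


lemma Down:
  fixes q :: "'a::field"
  assumes q0: "q \<noteq> 0" and nz: "\<forall>n::nat. n \<ge> 1 \<longrightarrow> q ^ n \<noteq> 1"
  shows "\<forall>M \<ge> int s. \<forall>a. ff q M (- int s) a = qbinom_plus q (M - int s) (- int s + a)"
proof (induction s)
  case 0
  then show ?case using Up[OF q0 nz, of 0] by simp
next
  case (Suc s)
  show ?case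
  proof (intro allI impI)
    fix M a0 :: int assume M: "int (Suc s) \<le> M"
    define S where "S = - int s"
    define d where "d a = ff q M (S - 1) a - qbinom_plus q (M + (S - 1)) ((S - 1) + a)" for a
    have rec: "q powi (S + a) * d (a + 1) + d a = 0" for a
    proof -
      have f1: "ff q M S a = q powi (S+a) * ff q M (S-1) (a+1) + ff q M (S-1) a"
        by (rule RS[OF q0 nz])
      have f2: "qbinom_plus q (M + S) (S + a) = q powi (S+a) * qbinom_plus q (M + (S-1)) ((S-1) + (a+1))
          + qbinom_plus q (M + (S-1)) ((S-1) + a)"
        using qbinom_pascal2[OF nz, of "S + a" "M + S"] M unfolding S_def
        by (simp add: qplus_nonneg algebra_simps)
      have f3: "ff q M S a = qbinom_plus q (M + S) (S + a)"
        using Suc.IH M unfolding S_def by simp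
      show ?thesis using f1 f2 f3 unfolding d_def by (simp add: algebra_simps)
    qed
    have base: "d a = 0" if a: "a \<le> int s" for a
    proof -
      have "ff q M (S - 1) a = 0"
        unfolding ff_def
      proof (rule sum.neutral, rule ballI)
        fix k assume k: "k \<in> {-a..M-a}"
        have "qbinom_plus q (S - 1) k = 0"
          using qplus_neg[of "S-1" q k] k a qbinom_gt[of "- k - 1" "- (S - 1) - 1" "inverse q"]
          unfolding S_def by simp
        then show "tt q M (S - 1) a k = 0" unfolding tt_def by simp
      qed
      moreover have "qbinom_plus q (M + (S - 1)) ((S - 1) + a) = 0"
        using M a qbinom_neg2[of "(S - 1) + a" q "M + (S - 1)"] unfolding S_def
        by (simp add: qplus_nonneg)
      ultimately show ?thesis unfolding d_def by simp
    qed
    have up: "d (int s + int j) = 0" for j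
    proof (induction j)
      case 0 then show ?case using base by simp
    next
      case (Suc j)
      have "q powi (S + (int s + int j)) * d (int s + int j + 1) = 0"
        using rec[of "int s + int j"] Suc.IH by simp
      then have "d (int s + int j + 1) = 0" using q0 by simp
      moreover have "int s + int (Suc j) = int s + int j + 1" by simp
      ultimately show ?case by metis
    qed
    have all: "d a = 0" for a
    proof (cases "a \<le> int s")
      case True then show ?thesis by (rule base)
    next
      case False
      then have "a = int s + int (nat (a - int s))" by simp
      then show ?thesis using up by metis
    qed
    have e: "S - 1 = - int (Suc s)" unfolding S_def by simp
    show "ff q M (- int (Suc s)) a0 = qbinom_plus q (M - int (Suc s)) (- int (Suc s) + a0)"
      using all[of a0] unfolding d_def e by (simp add: algebra_simps)
  qed
qed


lemma Main:
  fixes q :: "'a::field"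
  assumes q0: "q \<noteq> 0" and nz: "\<forall>n::nat. n \<ge> 1 \<longrightarrow> q ^ n \<noteq> 1"
    and M: "0 \<le> M" and MS: "0 \<le> M + S"
  shows "ff q M S a = qbinom_plus q (M + S) (S + a)"
proof (cases "0 \<le> S")
  case True
  then have "S = int (nat S)" by simp
  then show ?thesis using Up[OF q0 nz, of "nat S"] M by metis
next
  case False
  then have e: "S = - int (nat (- S))" by simp
  have "M \<ge> int (nat (- S))" using MS False by simp
  then have "ff q M (- int (nat (- S))) a = qbinom_plus q (M - int (nat (- S))) (- int (nat (- S)) + a)"
    using Down[OF q0 nz, of "nat (- S)"] by blast
  then show ?thesis using e by (metis diff_conv_add_uminus)
qed

lemma sum_support:
  assumes "finite I" "{k. g k \<noteq> 0} \<subseteq> I"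
  shows "finite {k. g k \<noteq> 0} \<and> sum g {k. g k \<noteq> 0} = sum g I"
proof
  show "finite {k. g k \<noteq> 0}" using assms finite_subset by blast
  show "sum g {k. g k \<noteq> 0} = sum g I"
    by (rule sum.mono_neutral_left) (use assms in auto)
qed

lemma qbinom_sym: "0 \<le> n \<Longrightarrow> qbinom q n m = qbinom q n (n - m)"
  by (auto simp: qbinom_def mult.commute)

theorem mainTheorem6:
  fixes q :: "'a::field" and M S a :: int
  assumes "q \<noteq> 0" and "\<forall>n::nat. n \<ge> 1 \<longrightarrow> q ^ n \<noteq> 1"
    and "M + S \<ge> 0"
  shows "finite {k::int. q powi (k^2 + a*k) * qbinom_plus q M (a + k) * qbinom_plus q S k \<noteq> 0}
    \<and> (\<Sum>k\<in>{k::int. q powi (k^2 + a*k) * qbinom_plus q M (a + k) * qbinom_plus q S k \<noteq> 0}.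
          q powi (k^2 + a*k) * qbinom_plus q M (a + k) * qbinom_plus q S k)
       = qbinom_plus q (M + S) (S + a)"
proof (cases "0 \<le> M")
  case True
  have sub: "{k. tt q M S a k \<noteq> 0} \<subseteq> {-a..M-a}"
  proof
    fix k assume "k \<in> {k. tt q M S a k \<noteq> 0}"
    then have "qbinom_plus q M (a + k) \<noteq> 0" unfolding tt_def by auto
    then show "k \<in> {-a..M-a}" using True by (auto simp: qbinom_plus_def qbinom_def split: if_splits)
  qed
  have "ff q M S a = qbinom_plus q (M + S) (S + a)" using Main[OF assms(1,2) True assms(3)] .
  then show ?thesis using sum_support[OF _ sub] unfolding ff_def tt_def by simp
next
  case False
  then have S: "0 \<le> S" using assms(3) by simp
  have sub: "{k. tt q M S a k \<noteq> 0} \<subseteq> {0..S}"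
  proof
    fix k assume "k \<in> {k. tt q M S a k \<noteq> 0}"
    then have "qbinom_plus q S k \<noteq> 0" unfolding tt_def by auto
    then show "k \<in> {0..S}" using S by (auto simp: qbinom_plus_def qbinom_def split: if_splits)
  qed
  have "(\<Sum>k\<in>{0..S}. tt q M S a k) = (\<Sum>j\<in>{a..S+a}. tt q S M (-a) j)"
  proof (rule sum.reindex_bij_witness[of _ "\<lambda>j. j - a" "\<lambda>k. k + a"])
    fix k assume "k \<in> {0..S}"
    have "(k + a)^2 + (-a) * (k + a) = k^2 + a * k" by (simp add: power2_eq_square algebra_simps)
    then show "tt q S M (-a) (k + a) = tt q M S a k" unfolding tt_def by (simp add: algebra_simps)
  qed auto
  also have "\<dots> = ff q S M (-a)" unfolding ff_def by simp
  also have "\<dots> = qbinom_plus q (S + M) (M + - a)"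
    using Main[OF assms(1,2) S] assms(3) by (simp add: add.commute)
  also have "\<dots> = qbinom_plus q (M + S) (S + a)"
    using assms(3) qbinom_sym[of "M + S" q "M - a"] by (simp add: qbinom_plus_def algebra_simps)
  finally show ?thesis using sum_support[OF _ sub] unfolding tt_def by simp
qed

end
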